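(* The unrestricted black box complexity of the class of affine OneMax functions satisfies $B_{\mathcal{F}}=\Omega(n/\log n)$.
   Context: Identify $\{0,1\}$ with $\mathbb{F}_2$. $\ell(x)=\sum_{i=1}^n x_i$ (real sum). $\mathcal{F}$ is the set of functions $f(x)=\ell(Mx+b)$ on $\{0,1\}^n$ with $M\in\mathrm{GL}(n,\mathbb{F}_2)$, $b\in\mathbb{F}_2^n$ ($Mx+b$ over $\mathbb{F}_2$). For a class $\mathcal{C}$ of functions $\{0,1\}^n\to\mathbb{R}$, its (unrestricted) black box complexity is $B_{\mathcal{C}}=\inf_{A}\sup_{f\in\mathcal{C}}\mathbb{E}(T(A,f))$, where $A$ ranges over all randomized black-box search algorithms and $T(A,f)$ is the number of evaluations of $f$ made by $A$ until a global maximizer of $f$ is evaluated for the first time. *)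

theory Defs
  imports "HOL-Probability.Probability"
begin

text \<open>Search points: {0,1}^n as boolean lists of length n (True = 1).\<close>
definition points :: "nat \<Rightarrow> bool list set" where
  "points n = {x. length x = n}"

definition onemax :: "bool list \<Rightarrow> real" where
  "onemax x = real (count_list x True)"

text \<open>n x n matrices over F_2 (only entries with indices < n matter), products over F_2.\<close>
definition mat_vec :: "nat \<Rightarrow> (nat \<Rightarrow> nat \<Rightarrow> bool) \<Rightarrow> bool list \<Rightarrow> bool list" where
  "mat_vec n M x = map (\<lambda>i. odd (card {j. j < n \<and> M i j \<and> x ! j})) [0..<n]"

definition mat_mult :: "nat \<Rightarrow> (nat \<Rightarrow> nat \<Rightarrow> bool) \<Rightarrow> (nat \<Rightarrow> nat \<Rightarrow> bool) \<Rightarrow> nat \<Rightarrow> nat \<Rightarrow> bool" where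
  "mat_mult n M N = (\<lambda>i k. odd (card {j. j < n \<and> M i j \<and> N j k}))"

definition GL2 :: "nat \<Rightarrow> (nat \<Rightarrow> nat \<Rightarrow> bool) set" where
  "GL2 n = {M. \<exists>N. \<forall>i<n. \<forall>k<n.
      mat_mult n M N i k = (i = k) \<and> mat_mult n N M i k = (i = k)}"

definition vec_add :: "bool list \<Rightarrow> bool list \<Rightarrow> bool list" where
  "vec_add x y = map2 (\<lambda>a b. a \<noteq> b) x y"

definition affine_onemax :: "nat \<Rightarrow> (bool list \<Rightarrow> real) set" where
  "affine_onemax n = {(\<lambda>x. onemax (vec_add (mat_vec n M x) b)) | M b.
      M \<in> GL2 n \<and> b \<in> points n}"

text \<open>A randomized black-box algorithm: given the history of queried points and their
  f-values, it outputs a probability distribution of the next query in {0,1}^n.\<close>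
type_synonym algorithm = "(bool list \<times> real) list \<Rightarrow> bool list pmf"

definition bb_algs :: "nat \<Rightarrow> algorithm set" where
  "bb_algs n = {A. \<forall>h. set_pmf (A h) \<subseteq> points n}"

definition maximizers :: "nat \<Rightarrow> (bool list \<Rightarrow> real) \<Rightarrow> bool list set" where
  "maximizers n f = {x \<in> points n. \<forall>y \<in> points n. f y \<le> f x}"

text \<open>surv A f S t h: probability that, starting from history h, none of the next t
  queries lies in S.\<close>
primrec surv :: "algorithm \<Rightarrow> (bool list \<Rightarrow> real) \<Rightarrow> bool list set \<Rightarrow> nat \<Rightarrow>
    (bool list \<times> real) list \<Rightarrow> ennreal" where
  "surv A f S 0 h = 1"
| "surv A f S (Suc t) h =
     (\<integral>\<^sup>+ x. (if x \<in> S then 0 else surv A f S t (h @ [(x, f x)])) \<partial>measure_pmf (A h))"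

text \<open>Expected number of evaluations until a global maximizer is first evaluated:
  E[T] = sum over t \<ge> 0 of P(T > t).\<close>
definition runtime :: "nat \<Rightarrow> algorithm \<Rightarrow> (bool list \<Rightarrow> real) \<Rightarrow> ennreal" where
  "runtime n A f = (\<Sum>t. surv A f (maximizers n f) t [])"

definition bb_complexity :: "nat \<Rightarrow> (bool list \<Rightarrow> real) set \<Rightarrow> ennreal" where
  "bb_complexity n C = (INF A \<in> bb_algs n. SUP f \<in> C. runtime n A f)"

end

theory Submission
  imports Defs "HOL-Real_Asymp.Real_Asymp"
begin


lemma card_sing: "i < n \<Longrightarrow> card {j. j < n \<and> i = j \<and> P j} = (if P i then 1 else 0)"
proof -
  assume "i < n"
  then have "{j. j < n \<and> i = j \<and> P j} = (if P i then {i} else {})" by auto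
  then show ?thesis by simp
qed

lemma mat_vec_id: "length x = n \<Longrightarrow> mat_vec n (\<lambda>i j. i = j) x = x"
  unfolding mat_vec_def
  apply (rule nth_equalityI)
   apply simp
  apply (subst nth_map) apply simp
  apply (subst card_sing) apply auto
  done

lemma id_GL2: "(\<lambda>i j. i = j) \<in> GL2 n"
  unfolding GL2_def mat_mult_def
  apply (rule CollectI)
  apply (rule exI[of _ "\<lambda>i j. i = j"])
  apply (intro allI impI)
  apply (subst card_sing, assumption)+
  by auto

definition fz :: "nat \<Rightarrow> bool list \<Rightarrow> bool list \<Rightarrow> real" where
  "fz n z = (\<lambda>x. onemax (vec_add (mat_vec n (\<lambda>i j. i = j) x) (map Not z)))"

lemma fz_in: "z \<in> points n \<Longrightarrow> fz n z \<in> affine_onemax n"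
  unfolding affine_onemax_def fz_def
  apply (rule CollectI)
  apply (rule exI[of _ "\<lambda>i j. i = j"])
  apply (rule exI[of _ "map Not z"])
  using id_GL2 by (auto simp: points_def)

lemma points_eq: "points n = {xs. set xs \<subseteq> (UNIV::bool set) \<and> length xs = n}"
    by (auto simp: points_def)

lemma finite_points: "finite (points n)"
  unfolding points_eq by (rule finite_lists_length_eq) simp

lemma card_points: "card (points n) = 2 ^ n"
  unfolding points_eq by (subst card_lists_length_eq) auto



lemma count_all: "count_list ys True = length ys \<longleftrightarrow> (\<forall>y\<in>set ys. y)"
proof (induction ys)
  case Nil then show ?case by simp
next
  case (Cons a ys)
  have "count_list ys True \<le> length ys" by (rule count_le_length)
  with Cons show ?case by auto
qed

lemma fz_points: "length x = n \<Longrightarrow> fz n z x = real (count_list (vec_add x (map Not z)) True)"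
  by (simp add: fz_def mat_vec_id onemax_def)

lemma maxim: assumes "z \<in> points n" shows "maximizers n (fz n z) = {z}"
proof -
  have lz: "length z = n" using assms by (simp add: points_def)
  have le: "fz n z y \<le> n" if "length y = n" for y
  proof -
    have "count_list (vec_add y (map Not z)) True \<le> length (vec_add y (map Not z))"
      by (rule count_le_length)
    then show ?thesis using that lz by (simp add: fz_points vec_add_def)
  qed
  have zz: "fz n z z = n"
  proof -
    have "\<forall>y\<in>set (vec_add z (map Not z)). y"
      by (auto simp: vec_add_def in_set_zip)
    then have "count_list (vec_add z (map Not z)) True = length (vec_add z (map Not z))"
      using count_all by blast
    then show ?thesis using lz by (simp add: fz_points vec_add_def)
  qed
  have eq: "x = z" if "length x = n" "fz n z x \<ge> n" for x
  proof -
    have "count_list (vec_add x (map Not z)) True \<le> length (vec_add x (map Not z))"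
      by (rule count_le_length)
    then have "count_list (vec_add x (map Not z)) True = length (vec_add x (map Not z))"
      using that lz by (simp add: fz_points vec_add_def)
    then have all: "\<forall>y\<in>set (vec_add x (map Not z)). y" using count_all by blast
    show ?thesis
    proof (rule nth_equalityI)
      show "length x = length z" using that lz by simp
      fix i assume "i < length x"
      then have "vec_add x (map Not z) ! i \<in> set (vec_add x (map Not z))"
        using that lz by (intro nth_mem) (simp add: vec_add_def)
      with all have "vec_add x (map Not z) ! i" by blast
      then show "x ! i = z ! i" using \<open>i < length x\<close> that lz by (simp add: vec_add_def)
    qed
  qed
  show ?thesis
    unfolding maximizers_def using le zz eq assms
    by (auto simp: points_def)
qed



primrec hit :: "algorithm \<Rightarrow> (bool list \<Rightarrow> real) \<Rightarrow> bool list set \<Rightarrow> nat \<Rightarrow>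
    (bool list \<times> real) list \<Rightarrow> ennreal" where
  "hit A f S 0 h = 0"
| "hit A f S (Suc t) h =
     (\<integral>\<^sup>+ x. (if x \<in> S then 1 else hit A f S t (h @ [(x, f x)])) \<partial>measure_pmf (A h))"

lemma surv_hit: "surv A f S t h + hit A f S t h = 1"
proof (induction t arbitrary: h)
  case 0 then show ?case by simp
next
  case (Suc t)
  have "surv A f S (Suc t) h + hit A f S (Suc t) h =
    (\<integral>\<^sup>+ x. (if x \<in> S then 0 else surv A f S t (h @ [(x, f x)])) +
      (if x \<in> S then 1 else hit A f S t (h @ [(x, f x)])) \<partial>measure_pmf (A h))"
    by (simp add: nn_integral_add)
  also have "\<dots> = (\<integral>\<^sup>+ x. 1 \<partial>measure_pmf (A h))"
    by (rule nn_integral_cong) (simp add: Suc.IH)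
  also have "\<dots> = 1" by simp
  finally show ?case .
qed

lemma fz_range: "fz n z x \<in> real ` {0..n}"
proof -
  have "count_list (vec_add (mat_vec n (\<lambda>i j. i = j) x) (map Not z)) True
     \<le> length (vec_add (mat_vec n (\<lambda>i j. i = j) x) (map Not z))"
    by (rule count_le_length)
  also have "\<dots> \<le> n" by (simp add: vec_add_def mat_vec_def)
  finally show ?thesis by (auto simp: fz_def onemax_def)
qed

lemma hit_sum: "(\<Sum>z\<in>points n. hit A (fz n z) {z} t h) \<le> of_nat ((n+2)^t)"
proof (induction t arbitrary: h)
  case 0 then show ?case by simp
next
  case (Suc t)
  let ?V = "real ` {0..n}"
  let ?H = "\<lambda>z x v. hit A (fz n z) {z} t (h @ [(x, v)])"
  have pw: "(\<Sum>z\<in>points n. (if x \<in> {z} then 1 else ?H z x (fz n z x)))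
      \<le> of_nat (1 + (n+1) * (n+2)^t)" for x
  proof -
    have "(\<Sum>z\<in>points n. (if x \<in> {z} then 1 else ?H z x (fz n z x)))
        \<le> (\<Sum>z\<in>points n. (if x = z then 1 else 0) + (\<Sum>v\<in>?V. ?H z x v))"
    proof (rule sum_mono)
      fix z
      have "?H z x (fz n z x) \<le> (\<Sum>v\<in>?V. ?H z x v)"
        by (rule member_le_sum) (auto simp: fz_range)
      then show "(if x \<in> {z} then 1 else ?H z x (fz n z x))
          \<le> (if x = z then 1 else 0) + (\<Sum>v\<in>?V. ?H z x v)"
        by (auto intro: add_increasing)
    qed
    also have "\<dots> = (\<Sum>z\<in>points n. (if x = z then 1 else 0)) + (\<Sum>v\<in>?V. \<Sum>z\<in>points n. ?H z x v)"
      by (simp add: sum.distrib sum.swap[of _ "points n"])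
    also have "\<dots> \<le> 1 + (\<Sum>v\<in>?V. of_nat ((n+2)^t))"
    proof (rule add_mono)
      show "(\<Sum>z\<in>points n. (if x = z then 1 else 0)) \<le> (1::ennreal)"
        using finite_points by (simp add: sum.delta)
      show "(\<Sum>v\<in>?V. \<Sum>z\<in>points n. ?H z x v) \<le> (\<Sum>v\<in>?V. of_nat ((n+2)^t))"
        by (rule sum_mono) (rule Suc.IH)
    qed
    also have "\<dots> = of_nat (1 + (n+1) * (n+2)^t)"
    proof -
      have "card ?V = n + 1" by (simp add: card_image inj_on_def)
      then have "(\<Sum>v\<in>?V. (of_nat ((n+2)^t)::ennreal)) = of_nat ((n+1) * (n+2)^t)"
        by (simp only: sum_constant of_nat_mult)
      then show ?thesis by (simp only: of_nat_add of_nat_1)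
    qed
    finally show ?thesis .
  qed
  have "(\<Sum>z\<in>points n. hit A (fz n z) {z} (Suc t) h)
     = (\<integral>\<^sup>+ x. (\<Sum>z\<in>points n. (if x \<in> {z} then 1 else ?H z x (fz n z x))) \<partial>measure_pmf (A h))"
    by (simp add: nn_integral_sum finite_points)
  also have "\<dots> \<le> (\<integral>\<^sup>+ x. of_nat (1 + (n+1) * (n+2)^t) \<partial>measure_pmf (A h))"
    by (rule nn_integral_mono) (rule pw)
  also have "\<dots> = of_nat (1 + (n+1) * (n+2)^t)" by simp
  also have "\<dots> \<le> of_nat ((n+2)^Suc t)"
  proof -
    have "1 \<le> (n+2)^t" by simp
    then have "1 + (n+1) * (n+2)^t \<le> (n+2)^Suc t" by simp
    then show ?thesis by (simp only: of_nat_le_iff)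
  qed
  finally show ?case .
qed



lemma alg_bound: assumes "2 * (n+2)^T \<le> (2::nat)^n"
  shows "of_nat T \<le> 2 * (SUP f\<in>affine_onemax n. runtime n A f)"
proof -
  define S where "S = (SUP f\<in>affine_onemax n. runtime n A f)"
  define M :: nat where "M = 2^n"
  let ?s = "\<lambda>z t. surv A (fz n z) {z} t []"
  have rt: "runtime n A (fz n z) = (\<Sum>t. ?s z t)" if "z \<in> points n" for z
    using that by (simp add: runtime_def maxim)
  have rS: "runtime n A (fz n z) \<le> S" if "z \<in> points n" for z
    unfolding S_def by (rule SUP_upper) (rule fz_in[OF that])
  have key: "of_nat M \<le> 2 * (\<Sum>z\<in>points n. ?s z t)" if "t < T" for t
  proof -
    have "(n+2)^t \<le> (n+2)^T" using that by (simp add: power_increasing)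
    then have K: "2 * (n+2)^t \<le> M" using assms M_def by linarith
    have "(\<Sum>z\<in>points n. (1::ennreal)) = of_nat (card (points n))" by simp
    then have "of_nat M = (\<Sum>z\<in>points n. (1::ennreal))" unfolding card_points M_def by simp
    also have "\<dots> = (\<Sum>z\<in>points n. ?s z t + hit A (fz n z) {z} t [])"
      by (simp add: surv_hit)
    also have "\<dots> = (\<Sum>z\<in>points n. ?s z t) + (\<Sum>z\<in>points n. hit A (fz n z) {z} t [])"
      by (simp add: sum.distrib)
    also have "\<dots> \<le> (\<Sum>z\<in>points n. ?s z t) + of_nat ((n+2)^t)"
      by (rule add_left_mono) (rule hit_sum)
    finally have "of_nat M \<le> (\<Sum>z\<in>points n. ?s z t) + of_nat ((n+2)^t)" .
    then have "2 * of_nat M \<le> 2 * ((\<Sum>z\<in>points n. ?s z t) + of_nat ((n+2)^t))"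
      by (rule mult_left_mono) simp
    then have "of_nat M + of_nat M \<le> 2 * (\<Sum>z\<in>points n. ?s z t) + 2 * of_nat ((n+2)^t)"
      by (simp only: mult_2 distrib_left)
    also have "\<dots> \<le> 2 * (\<Sum>z\<in>points n. ?s z t) + of_nat M"
    proof -
      have "2 * of_nat ((n+2)^t) = (of_nat (2 * (n+2)^t) :: ennreal)" by simp
      also have "\<dots> \<le> of_nat M" using K by (simp only: of_nat_le_iff)
      finally show ?thesis by (rule add_left_mono)
    qed
    finally have "of_nat M + of_nat M \<le> of_nat M + 2 * (\<Sum>z\<in>points n. ?s z t)"
      by (simp only: add.commute)
    then show ?thesis by (simp add: ennreal_add_left_cancel_le)
  qed
  have "of_nat M * of_nat T = (\<Sum>t<T. (of_nat M :: ennreal))" by (simp add: mult.commute)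
  also have "\<dots> \<le> (\<Sum>t<T. 2 * (\<Sum>z\<in>points n. ?s z t))"
    by (rule sum_mono) (simp add: key)
  also have "\<dots> = 2 * (\<Sum>z\<in>points n. \<Sum>t<T. ?s z t)"
    by (simp add: sum_distrib_left sum.swap[of _ "{..<T}"])
  also have "\<dots> \<le> 2 * (\<Sum>z\<in>points n. runtime n A (fz n z))"
  proof -
    have "(\<Sum>t<T. ?s z t) \<le> runtime n A (fz n z)" if "z \<in> points n" for z
      unfolding rt[OF that] by (rule sum_le_suminf) auto
    then show ?thesis by (intro mult_left_mono sum_mono) auto
  qed
  also have "\<dots> \<le> 2 * (\<Sum>z\<in>points n. S)"
    by (intro mult_left_mono sum_mono rS) auto
  also have "\<dots> = of_nat M * (2 * S)"
  proof -
    have "(\<Sum>z\<in>points n. S) = of_nat (card (points n)) * S" by (rule sum_constant)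
    then show ?thesis unfolding card_points M_def by (simp only: mult.commute mult.left_commute mult.assoc)
  qed
  finally have "of_nat M * of_nat T \<le> of_nat M * (2 * S)" .
  moreover have "(of_nat M :: ennreal) \<noteq> 0" by (simp add: M_def)
  moreover have "(of_nat M :: ennreal) \<noteq> \<top>" by simp
  ultimately show ?thesis unfolding S_def by (simp add: ennreal_mult_le_mult_iff)
qed


lemma ev_asymp: "\<forall>\<^sub>F x::real in at_top. (1/10) * x / ln x \<le> ((x - 1) * (1/2) / ln (x + 2) - 1) / 2"
  by real_asymp

lemma ev_nat: "\<exists>N. \<forall>n\<ge>N. (1/10) * real n / ln (real n) \<le> ((real n - 1) * (1/2) / ln (real n + 2) - 1) / 2"
proof -
  have "\<forall>\<^sub>F n in sequentially. (1/10) * real n / ln (real n) \<le> ((real n - 1) * (1/2) / ln (real n + 2) - 1) / 2"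
    using filterlim_real_sequentially ev_asymp unfolding filterlim_iff by fast
  then show ?thesis by (simp add: eventually_sequentially)
qed

lemma ln2_ge: "ln (2::real) \<ge> 1/2"
  by (metis le_numeral_extra(1) ln_add1_ge one_add_one)

lemma per_n:
  assumes n2: "n \<ge> 2"
    and ineq: "(1/10) * real n / ln (real n) \<le> ((real n - 1) * (1/2) / ln (real n + 2) - 1) / 2"
  shows "ennreal ((1/10) * real n / ln (real n)) \<le> bb_complexity n (affine_onemax n)"
proof -
  define x where "x = (real n - 1) * (1/2) / ln (real n + 2)"
  define T where "T = nat \<lfloor>x\<rfloor>"
  have lnpos: "ln (real n + 2) > 0" using n2 by simp
  have x0: "x \<ge> 0" unfolding x_def using n2 lnpos by simp
  have Tle: "real T \<le> x" unfolding T_def using x0 by simp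
  have Tge: "real T \<ge> x - 1" unfolding T_def using x0 by linarith
  have "real T * ln (real n + 2) \<le> x * ln (real n + 2)"
    using Tle lnpos by (simp add: mult_right_mono)
  also have "\<dots> = (real n - 1) * (1/2)" unfolding x_def using lnpos by simp
  also have "\<dots> \<le> (real n - 1) * ln 2"
    using ln2_ge n2 by (intro mult_left_mono) auto
  also have "\<dots> = ln (2 ^ (n - 1))"
    using n2 by (simp add: ln_realpow of_nat_diff)
  finally have "ln ((real n + 2) ^ T) \<le> ln (2 ^ (n - 1))"
    using lnpos by (simp add: ln_realpow)
  then have "(real n + 2) ^ T \<le> 2 ^ (n - 1)"
    by (subst (asm) ln_le_cancel_iff) auto
  then have "real ((n + 2) ^ T) \<le> real (2 ^ (n - 1))" by (simp only: of_nat_power of_nat_add of_nat_numeral)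
  then have "(n + 2) ^ T \<le> 2 ^ (n - 1)" by (simp only: of_nat_le_iff)
  moreover have "(2::nat) ^ n = 2 * 2 ^ (n - 1)"
    using n2 by (cases n) simp_all
  ultimately have cond: "2 * (n + 2) ^ T \<le> (2::nat) ^ n" by simp
  have r: "2 * ((1/10) * real n / ln (real n)) \<le> real T"
  proof -
    define a where "a = (1/10) * real n / ln (real n)"
    have "a \<le> (x - 1) / 2" using ineq unfolding a_def x_def .
    then have "2 * a \<le> x - 1" by simp
    then have "2 * a \<le> real T" using Tge by (rule order_trans)
    then show ?thesis unfolding a_def .
  qed
  show ?thesis
    unfolding bb_complexity_def
  proof (rule INF_greatest)
    fix A assume "A \<in> bb_algs n"
    have "2 * ennreal ((1/10) * real n / ln (real n)) = ennreal (2 * ((1/10) * real n / ln (real n)))"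
    proof -
      have a0: "0 \<le> (1/10) * real n / ln (real n)" using n2 by simp
      have "ennreal (2 * ((1/10) * real n / ln (real n))) = ennreal 2 * ennreal ((1/10) * real n / ln (real n))"
        by (rule ennreal_mult) (simp, rule a0)
      then show ?thesis by simp
    qed
    also have "\<dots> \<le> ennreal (real T)" using r by (rule ennreal_leI)
    also have "\<dots> = of_nat T" by (rule ennreal_of_nat_eq_real_of_nat[symmetric])
    also have "\<dots> \<le> 2 * (SUP f\<in>affine_onemax n. runtime n A f)" by (rule alg_bound[OF cond])
    finally show "ennreal ((1/10) * real n / ln (real n)) \<le> (SUP f\<in>affine_onemax n. runtime n A f)"
      by (subst (asm) ennreal_mult_le_mult_iff) auto
  qed
qed

theorem theorem3:
  "\<exists>c > 0. \<exists>N. \<forall>n \<ge> N.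
     ennreal (c * real n / ln (real n)) \<le> bb_complexity n (affine_onemax n)"
proof -
  obtain N where N: "\<forall>n\<ge>N. (1/10) * real n / ln (real n) \<le> ((real n - 1) * (1/2) / ln (real n + 2) - 1) / 2"
    using ev_nat by blast
  have H: "\<forall>n \<ge> max N 2. ennreal ((1/10) * real n / ln (real n)) \<le> bb_complexity n (affine_onemax n)"
    using N per_n by auto
  show ?thesis
  proof (rule exI[where x="1/10::real"], rule conjI)
    show "(1/10::real) > 0" by simp
    show "\<exists>N. \<forall>n\<ge>N. ennreal ((1/10::real) * real n / ln (real n)) \<le> bb_complexity n (affine_onemax n)"
      using H by (rule exI)
  qed
qed

end
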